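(* Let $n\geq 2$ be an integer and $\zeta\in\mathbb{R}$. For $(x,y_{1},\ldots,y_{n})\in\mathbb{R}^{n+1}$ write $P(\zeta)=x+\zeta y_{1}+\cdots+\zeta^{n}y_{n}$ and $P^{\prime}(\zeta)=y_{1}+2\zeta y_{2}+\cdots+n\zeta^{n-1}y_{n}$. For $Q>1$ let \[ K^{+}(Q)=\{(x,y_{1},\ldots,y_{n})\in\mathbb{R}^{n+1}: \vert y_{t}\vert\leq Q^{1/n}\ (1\leq t\leq n),\ \vert P(\zeta)\vert\leq Q^{-1}\}, \] and for $c>0$ let $\mathscr{K}_{c}(Q)=K^{+}(Q)\cap\{(x,y_{1},\ldots,y_{n}): \vert P^{\prime}(\zeta)\vert\leq cQ^{1/n}\}$. For each $Q>1$ let $c(Q)>0$ be the (unique) number with \[ \mathrm{vol}(\mathscr{K}_{c(Q)}(Q))=\frac{1}{2(n+1)!}\mathrm{vol}(K^{+}(Q))=\frac{2^{n+1}}{2(n+1)!}. \] Then there is a constant $B>0$, independent of $Q$, such that $c(Q)\geq B$ for all $Q>1$; in particular $\liminf_{Q\to\infty}\log_{Q}c(Q)\geq 0$.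
   Context: $\mathrm{vol}$ denotes $(n+1)$-dimensional Lebesgue measure. *)

theory Defs
  imports "HOL-Analysis.Analysis"
begin

text \<open>Points of R^(n+1) are functions p :: nat => real on {0..n}, with
  p 0 = x and p t = y_t (1 <= t <= n); Lebesgue measure on R^(n+1) is the
  (n+1)-fold product of Lebesgue-Borel measure.\<close>

definition volR :: "nat \<Rightarrow> (nat \<Rightarrow> real) set \<Rightarrow> real" where
  "volR n S = measure (Pi\<^sub>M {..n} (\<lambda>_. lborel)) S"

definition Pval :: "nat \<Rightarrow> real \<Rightarrow> (nat \<Rightarrow> real) \<Rightarrow> real" where
  "Pval n \<zeta> p = p 0 + (\<Sum>t=1..n. \<zeta> ^ t * p t)"

definition Pder :: "nat \<Rightarrow> real \<Rightarrow> (nat \<Rightarrow> real) \<Rightarrow> real" where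
  "Pder n \<zeta> p = (\<Sum>t=1..n. real t * \<zeta> ^ (t - 1) * p t)"

definition Kplus :: "nat \<Rightarrow> real \<Rightarrow> real \<Rightarrow> (nat \<Rightarrow> real) set" where
  "Kplus n \<zeta> Q = {p \<in> PiE {..n} (\<lambda>_. UNIV).
      (\<forall>t\<in>{1..n}. \<bar>p t\<bar> \<le> Q powr (1 / real n)) \<and> \<bar>Pval n \<zeta> p\<bar> \<le> 1 / Q}"

definition Kc :: "nat \<Rightarrow> real \<Rightarrow> real \<Rightarrow> real \<Rightarrow> (nat \<Rightarrow> real) set" where
  "Kc n \<zeta> c Q = Kplus n \<zeta> Q \<inter> {p. \<bar>Pder n \<zeta> p\<bar> \<le> c * Q powr (1 / real n)}"

end

theory Submission imports Defs "HOL-Real_Asymp.Real_Asymp" begin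

lemma ps: "product_sigma_finite (\<lambda>_::nat. (lborel :: real measure))" by standard

lemma slice_emeasure:
  fixes I :: "nat set" and S :: "(nat \<Rightarrow> real) set"
  assumes "finite I" "i \<notin> I" "S \<in> sets (Pi\<^sub>M (insert i I) (\<lambda>_. lborel))"
  shows "emeasure (Pi\<^sub>M (insert i I) (\<lambda>_. lborel)) S =
    (\<integral>\<^sup>+ y. emeasure lborel {x. y(i:=x) \<in> S} \<partial>(Pi\<^sub>M I (\<lambda>_. lborel)))"
proof -
  have "emeasure (Pi\<^sub>M (insert i I) (\<lambda>_. lborel)) S = (\<integral>\<^sup>+ p. indicator S p \<partial>(Pi\<^sub>M (insert i I) (\<lambda>_. lborel)))"
    using assms(3) by simp
  also have "\<dots> = (\<integral>\<^sup>+ y. (\<integral>\<^sup>+ x. indicator S (y(i:=x)) \<partial>lborel) \<partial>(Pi\<^sub>M I (\<lambda>_. lborel)))"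
    by (rule product_sigma_finite.product_nn_integral_insert[OF ps]) (use assms in auto)
  also have "\<dots> = (\<integral>\<^sup>+ y. emeasure lborel {x. y(i:=x) \<in> S} \<partial>(Pi\<^sub>M I (\<lambda>_. lborel)))"
  proof (rule nn_integral_cong)
    fix y :: "nat \<Rightarrow> real" assume y: "y \<in> space (Pi\<^sub>M I (\<lambda>_. lborel))"
    have m: "(\<lambda>x. y(i:=x)) \<in> measurable lborel (Pi\<^sub>M (insert i I) (\<lambda>_. lborel))"
      using measurable_component_update[OF y assms(2)] by simp
    have "{x. y(i:=x) \<in> S} = (\<lambda>x. y(i:=x)) -` S \<inter> space lborel" by auto
    hence s: "{x. y(i:=x) \<in> S} \<in> sets lborel"
      using measurable_sets[OF m assms(3)] by simp
    have "(\<integral>\<^sup>+ x. indicator S (y(i:=x)) \<partial>lborel) = (\<integral>\<^sup>+ x. indicator {x. y(i:=x) \<in> S} x \<partial>lborel)"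
      by (rule nn_integral_cong) (simp add: indicator_def)
    also have "\<dots> = emeasure lborel {x. y(i:=x) \<in> S}" using s by simp
    finally show "(\<integral>\<^sup>+ x. indicator S (y(i:=x)) \<partial>lborel) = emeasure lborel {x. y(i:=x) \<in> S}" .
  qed
  finally show ?thesis .
qed

lemma meas_Kplus: "Kplus n \<zeta> Q \<in> sets (Pi\<^sub>M {..n} (\<lambda>_. lborel))"
proof -
  have "Kplus n \<zeta> Q = {p \<in> space (Pi\<^sub>M {..n} (\<lambda>_. lborel)).
      (\<forall>t\<in>{1..n}. \<bar>p t\<bar> \<le> Q powr (1 / real n)) \<and> \<bar>Pval n \<zeta> p\<bar> \<le> 1 / Q}"
    by (simp add: Kplus_def space_PiM)
  also have "\<dots> \<in> sets (Pi\<^sub>M {..n} (\<lambda>_. lborel))"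
    unfolding Pval_def by measurable
  finally show ?thesis .
qed

lemma meas_Kc: "Kc n \<zeta> c Q \<in> sets (Pi\<^sub>M {..n} (\<lambda>_. lborel))"
proof -
  have "Kc n \<zeta> c Q = Kplus n \<zeta> Q \<inter> {p \<in> space (Pi\<^sub>M {..n} (\<lambda>_. lborel)). \<bar>Pder n \<zeta> p\<bar> \<le> c * Q powr (1 / real n)}"
    by (auto simp add: Kc_def Kplus_def space_PiM)
  also have "\<dots> \<in> sets (Pi\<^sub>M {..n} (\<lambda>_. lborel))"
    using meas_Kplus unfolding Pder_def by measurable
  finally show ?thesis .
qed

lemma box_emeasure:
  fixes I :: "nat set" and R :: real
  assumes "finite I" "R \<ge> 0"
  shows "emeasure (Pi\<^sub>M I (\<lambda>_. lborel)) (PiE I (\<lambda>_. {-R..R})) = ennreal ((2*R) ^ card I)"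
proof -
  have "emeasure (Pi\<^sub>M I (\<lambda>_. lborel)) (PiE I (\<lambda>_. {-R..R})) = (\<Prod>i\<in>I. emeasure lborel {-R..R})"
    using product_sigma_finite.emeasure_PiM[OF ps assms(1)] by simp
  also have "\<dots> = (\<Prod>i\<in>I. ennreal (2*R))" using assms by simp
  also have "\<dots> = ennreal ((2*R) ^ card I)" using assms by (simp add: ennreal_power)
  finally show ?thesis .
qed

lemma R_pow: assumes "Q > 0" "n \<ge> 1" shows "(Q powr (1 / real n)) ^ n = Q"
  using assms by (simp add: powr_realpow[symmetric] powr_powr)

lemma emeasure_Kplus:
  assumes "n \<ge> 1" "Q > 1"
  shows "emeasure (Pi\<^sub>M {..n} (\<lambda>_. lborel)) (Kplus n \<zeta> Q) = ennreal (2 ^ (n+1))"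
proof -
  define R where "R = Q powr (1 / real n)"
  have R0: "R \<ge> 0" unfolding R_def by simp
  have RQ: "R ^ n = Q" unfolding R_def using assms by (simp add: R_pow)
  have I: "{..n} = insert 0 {1..n}" by auto
  define B where "B = PiE {1..n} (\<lambda>_::nat. {-R..R})"
  have Bs: "B \<in> sets (Pi\<^sub>M {1..n} (\<lambda>_. lborel))" unfolding B_def by (rule sets_PiM_I_finite) auto
  have "emeasure (Pi\<^sub>M {..n} (\<lambda>_. lborel)) (Kplus n \<zeta> Q) =
      (\<integral>\<^sup>+ y. emeasure lborel {x. y(0:=x) \<in> Kplus n \<zeta> Q} \<partial>(Pi\<^sub>M {1..n} (\<lambda>_. lborel)))"
    using slice_emeasure[of "{1..n}" 0 "Kplus n \<zeta> Q"] meas_Kplus[of n \<zeta> Q] unfolding I by simp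
  also have "\<dots> = (\<integral>\<^sup>+ y. ennreal (2/Q) * indicator B y \<partial>(Pi\<^sub>M {1..n} (\<lambda>_. lborel)))"
  proof (rule nn_integral_cong)
    fix y :: "nat \<Rightarrow> real" assume y: "y \<in> space (Pi\<^sub>M {1..n} (\<lambda>_. lborel))"
    define s where "s = (\<Sum>t=1..n. \<zeta> ^ t * y t)"
    have pv: "Pval n \<zeta> (y(0:=x)) = x + s" for x
      unfolding Pval_def s_def by (intro arg_cong2[where f="(+)"] sum.cong) auto
    have pe: "y(0:=x) \<in> PiE {..n} (\<lambda>_. UNIV)" for x
      using y by (auto simp: space_PiM PiE_def extensional_def)
    show "emeasure lborel {x. y(0:=x) \<in> Kplus n \<zeta> Q} = ennreal (2/Q) * indicator B y"
    proof (cases "y \<in> B")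
      case True
      then have yb: "\<forall>t\<in>{1..n}. -R \<le> y t \<and> y t \<le> R" unfolding B_def by auto
      then have "{x. y(0:=x) \<in> Kplus n \<zeta> Q} = {-s-1/Q .. -s+1/Q}"
        unfolding Kplus_def using pe yb by (auto simp: pv R_def[symmetric] abs_le_iff)
      then show ?thesis using True assms by simp
    next
      case False
      have "\<exists>t\<in>{1..n}. \<not> \<bar>y t\<bar> \<le> R"
      proof (rule ccontr)
        assume "\<not> (\<exists>t\<in>{1..n}. \<not> \<bar>y t\<bar> \<le> R)"
        then have "y \<in> B" using y unfolding B_def by (auto simp: space_PiM abs_le_iff PiE_iff)
        then show False using False by simp
      qed
      then obtain t where "t \<in> {1..n}" "\<not> \<bar>y t\<bar> \<le> R" by blast
      then have "{x. y(0:=x) \<in> Kplus n \<zeta> Q} = {}"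
        unfolding Kplus_def by (auto simp: R_def)
      then show ?thesis using False by simp
    qed
  qed
  also have "\<dots> = ennreal (2/Q) * emeasure (Pi\<^sub>M {1..n} (\<lambda>_. lborel)) B"
    using Bs by (rule nn_integral_cmult_indicator)
  also have "\<dots> = ennreal (2/Q) * ennreal ((2*R)^n)"
    unfolding B_def using box_emeasure[OF _ R0, of "{1..n}"] by simp
  also have "\<dots> = ennreal (2/Q * (2*R)^n)" using assms R0 by (subst ennreal_mult) auto
  also have "2/Q * (2*R)^n = 2^(n+1)" using assms RQ by (simp add: power_mult_distrib)
  finally show ?thesis .
qed

lemma emeasure_Kc_le:
  assumes "n \<ge> 1" "Q > 1" "c > 0"
  shows "emeasure (Pi\<^sub>M {..n} (\<lambda>_. lborel)) (Kc n \<zeta> c Q) \<le> ennreal (2 ^ (n+1) * c)"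
proof -
  define R where "R = Q powr (1 / real n)"
  have R0: "R \<ge> 0" unfolding R_def by simp
  have RQ: "R ^ n = Q" unfolding R_def using assms by (simp add: R_pow)
  have I: "{..n} = insert 0 {1..n}" by auto
  define A where "A = {y \<in> space (Pi\<^sub>M {1..n} (\<lambda>_. lborel)).
      (\<forall>t\<in>{1..n}. \<bar>y t\<bar> \<le> R) \<and> \<bar>Pder n \<zeta> y\<bar> \<le> c * R}"
  have As: "A \<in> sets (Pi\<^sub>M {1..n} (\<lambda>_. lborel))" unfolding A_def Pder_def by measurable
  have "emeasure (Pi\<^sub>M {..n} (\<lambda>_. lborel)) (Kc n \<zeta> c Q) =
      (\<integral>\<^sup>+ y. emeasure lborel {x. y(0:=x) \<in> Kc n \<zeta> c Q} \<partial>(Pi\<^sub>M {1..n} (\<lambda>_. lborel)))"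
    using slice_emeasure[of "{1..n}" 0 "Kc n \<zeta> c Q"] meas_Kc[of n \<zeta> c Q] unfolding I by simp
  also have "\<dots> = (\<integral>\<^sup>+ y. ennreal (2/Q) * indicator A y \<partial>(Pi\<^sub>M {1..n} (\<lambda>_. lborel)))"
  proof (rule nn_integral_cong)
    fix y :: "nat \<Rightarrow> real" assume y: "y \<in> space (Pi\<^sub>M {1..n} (\<lambda>_. lborel))"
    define s where "s = (\<Sum>t=1..n. \<zeta> ^ t * y t)"
    have pv: "Pval n \<zeta> (y(0:=x)) = x + s" for x
      unfolding Pval_def s_def by (intro arg_cong2[where f="(+)"] sum.cong) auto
    have pd: "Pder n \<zeta> (y(0:=x)) = Pder n \<zeta> y" for x
      unfolding Pder_def by (intro sum.cong) auto
    have pe: "y(0:=x) \<in> PiE {..n} (\<lambda>_. UNIV)" for x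
      using y by (auto simp: space_PiM PiE_def extensional_def)
    show "emeasure lborel {x. y(0:=x) \<in> Kc n \<zeta> c Q} = ennreal (2/Q) * indicator A y"
    proof (cases "y \<in> A")
      case True
      then have yb: "\<forall>t\<in>{1..n}. \<bar>y t\<bar> \<le> R" "\<bar>Pder n \<zeta> y\<bar> \<le> c * R" unfolding A_def by auto
      then have "{x. y(0:=x) \<in> Kc n \<zeta> c Q} = {-s-1/Q .. -s+1/Q}"
        unfolding Kc_def Kplus_def using pe by (auto simp: pv pd R_def[symmetric] abs_le_iff)
      then show ?thesis using True assms by simp
    next
      case False
      then have "{x. y(0:=x) \<in> Kc n \<zeta> c Q} = {}"
        using y unfolding Kc_def Kplus_def A_def by (auto simp: pd R_def)
      then show ?thesis using False by simp
    qed
  qed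
  also have "\<dots> = ennreal (2/Q) * emeasure (Pi\<^sub>M {1..n} (\<lambda>_. lborel)) A"
    using As by (rule nn_integral_cmult_indicator)
  also have "emeasure (Pi\<^sub>M {1..n} (\<lambda>_. lborel)) A \<le> ennreal (2*c*R * (2*R)^(n-1))"
  proof -
    have I2: "{1..n} = insert 1 {2..n}" using assms by auto
    define B where "B = PiE {2..n} (\<lambda>_::nat. {-R..R})"
    have Bs: "B \<in> sets (Pi\<^sub>M {2..n} (\<lambda>_. lborel))" unfolding B_def by (rule sets_PiM_I_finite) auto
    have "emeasure (Pi\<^sub>M {1..n} (\<lambda>_. lborel)) A =
      (\<integral>\<^sup>+ z. emeasure lborel {u. z(1:=u) \<in> A} \<partial>(Pi\<^sub>M {2..n} (\<lambda>_. lborel)))"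
      using slice_emeasure[of "{2..n}" 1 A] As unfolding I2 by simp
    also have "\<dots> \<le> (\<integral>\<^sup>+ z. ennreal (2*c*R) * indicator B z \<partial>(Pi\<^sub>M {2..n} (\<lambda>_. lborel)))"
    proof (rule nn_integral_mono)
      fix z :: "nat \<Rightarrow> real" assume z: "z \<in> space (Pi\<^sub>M {2..n} (\<lambda>_. lborel))"
      define s where "s = (\<Sum>t=2..n. real t * \<zeta> ^ (t - 1) * z t)"
      have pd: "Pder n \<zeta> (z(1:=u)) = u + s" for u
      proof -
        have "Pder n \<zeta> (z(1:=u)) = real 1 * \<zeta> ^ (1 - 1) * (z(1:=u)) 1 +
            (\<Sum>t=Suc 1..n. real t * \<zeta> ^ (t - 1) * (z(1:=u)) t)"
          unfolding Pder_def using assms by (subst sum.atLeast_Suc_atMost) auto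
        also have "(\<Sum>t=Suc 1..n. real t * \<zeta> ^ (t - 1) * (z(1:=u)) t) = s"
          unfolding s_def by (intro sum.cong) auto
        finally show ?thesis by (simp only: fun_upd_same) simp
      qed
      show "emeasure lborel {u. z(1:=u) \<in> A} \<le> ennreal (2*c*R) * indicator B z"
      proof (cases "z \<in> B")
        case True
        have "{u. z(1:=u) \<in> A} \<subseteq> {-s-c*R .. -s+c*R}"
        proof
          fix u assume "u \<in> {u. z(1:=u) \<in> A}"
          then have "\<bar>Pder n \<zeta> (z(1:=u))\<bar> \<le> c * R" unfolding A_def by blast
          then show "u \<in> {-s-c*R .. -s+c*R}" unfolding pd by (simp add: abs_le_iff)
        qed
        then have "emeasure lborel {u. z(1:=u) \<in> A} \<le> emeasure lborel {-s-c*R .. -s+c*R}"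
          by (intro emeasure_mono) auto
        also have "\<dots> = ennreal (2*c*R)" using assms R0 by simp
        finally show ?thesis using True by simp
      next
        case False
        have "\<exists>t\<in>{2..n}. \<not> \<bar>z t\<bar> \<le> R"
        proof (rule ccontr)
          assume "\<not> (\<exists>t\<in>{2..n}. \<not> \<bar>z t\<bar> \<le> R)"
          then have "z \<in> B" using z unfolding B_def by (auto simp: space_PiM abs_le_iff PiE_iff)
          then show False using False by simp
        qed
        then obtain t where t: "t \<in> {2..n}" "\<not> \<bar>z t\<bar> \<le> R" by blast
        have "{u. z(1:=u) \<in> A} = {}"
        proof (safe)
          fix u assume "z(1:=u) \<in> A"
          then have "\<forall>t\<in>{1..n}. \<bar>(z(1:=u)) t\<bar> \<le> R" unfolding A_def by blast
          moreover have "t \<in> {1..n}" "t \<noteq> 1" using t(1) by auto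
          ultimately have "\<bar>(z(1:=u)) t\<bar> \<le> R" by blast
          then show "u \<in> {}" using t by simp
        qed
        then show ?thesis by simp
      qed
    qed
    also have "\<dots> = ennreal (2*c*R) * emeasure (Pi\<^sub>M {2..n} (\<lambda>_. lborel)) B"
      using Bs by (rule nn_integral_cmult_indicator)
    also have "\<dots> = ennreal (2*c*R) * ennreal ((2*R)^(n-1))"
      unfolding B_def using box_emeasure[OF _ R0, of "{2..n}"] by simp
    also have "\<dots> = ennreal (2*c*R * (2*R)^(n-1))" using assms R0 by (subst ennreal_mult) auto
    finally show ?thesis .
  qed
  then have "ennreal (2/Q) * emeasure (Pi\<^sub>M {1..n} (\<lambda>_. lborel)) A \<le> ennreal (2/Q) * ennreal (2*c*R * (2*R)^(n-1))"
    by (rule mult_left_mono) simp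
  also have "\<dots> = ennreal (2/Q * (2*c*R * (2*R)^(n-1)))" using assms R0 by (subst ennreal_mult) auto
  also have "2/Q * (2*c*R * (2*R)^(n-1)) = 2 ^ (n+1) * c"
  proof -
    have "(2*R)^n = 2*R*(2*R)^(n-1)" using assms by (cases n) auto
    then have e: "2*c*R * (2*R)^(n-1) = c * 2^n * Q" using RQ by (simp add: power_mult_distrib)
    have "2/Q * (2*c*R * (2*R)^(n-1)) = 2/Q * (c * 2^n * Q)" by (simp only: e)
    also have "\<dots> = 2 ^ (n+1) * c" using assms by (simp add: field_simps)
    finally show ?thesis .
  qed
  finally show ?thesis .
qed

theorem corollary1:
  fixes n :: nat and \<zeta> :: real and c :: "real \<Rightarrow> real"
  assumes "n \<ge> 2"
    and "\<And>Q. Q > 1 \<Longrightarrow> c Q > 0"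
    and "\<And>Q. Q > 1 \<Longrightarrow>
           volR n (Kc n \<zeta> (c Q) Q) = volR n (Kplus n \<zeta> Q) / (2 * fact (n + 1))"
  shows "(\<exists>B>0. \<forall>Q>1. c Q \<ge> B) \<and>
         Liminf at_top (\<lambda>Q. ereal (log Q (c Q))) \<ge> 0"
proof -
  define B :: real where "B = 1 / (2 * fact (n+1))"
  have B0: "B > 0" unfolding B_def by simp
  have cB: "c Q \<ge> B" if Q: "Q > 1" for Q
  proof -
    have n1: "n \<ge> 1" using assms(1) by simp
    have "volR n (Kplus n \<zeta> Q) = 2 ^ (n+1)"
      unfolding volR_def measure_def using emeasure_Kplus[OF n1 Q] by simp
    moreover have "volR n (Kc n \<zeta> (c Q) Q) \<le> 2 ^ (n+1) * c Q"
      unfolding volR_def measure_def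
      by (rule enn2real_leI) (use emeasure_Kc_le[OF n1 Q assms(2)[OF Q]] assms(2)[OF Q] in auto)
    ultimately have "2 ^ (n+1) / (2 * fact (n+1)) \<le> (2::real) ^ (n+1) * c Q"
      using assms(3)[OF Q] by simp
    then have "2 ^ (n+1) * B \<le> (2::real) ^ (n+1) * c Q" unfolding B_def by simp
    then show ?thesis by simp
  qed
  have lim: "((\<lambda>Q. ereal (log Q B)) \<longlongrightarrow> ereal 0) at_top"
  proof (rule tendsto_ereal)
    show "((\<lambda>Q. log Q B) \<longlongrightarrow> 0) at_top" unfolding log_def by real_asymp
  qed
  have "Liminf at_top (\<lambda>Q. ereal (log Q B)) = ereal 0"
    by (rule lim_imp_Liminf) (use lim in auto)
  moreover have "Liminf at_top (\<lambda>Q. ereal (log Q B)) \<le> Liminf at_top (\<lambda>Q. ereal (log Q (c Q)))"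
  proof (rule Liminf_mono)
    show "\<forall>\<^sub>F Q in at_top. ereal (log Q B) \<le> ereal (log Q (c Q))"
      using eventually_gt_at_top[of "1::real"]
    proof eventually_elim
      case (elim Q)
      then show ?case using cB[OF elim] B0 assms(2)[OF elim] by simp
    qed
  qed
  ultimately show ?thesis using B0 cB by (auto simp: zero_ereal_def)
qed

end
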